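(* Let $\boldsymbol\eta$ be a standard max-stable process with generator $\mathbf Z$. Then for $f\in\bar E^-[0,1]$: (i) $P(\boldsymbol\eta>f)\ge 1-\exp\big(-E\big(\inf_{0\le t\le 1}(|f(t)|Z_t)\big)\big)$; (ii) $\displaystyle\lim_{s\downarrow 0}\frac{P(\boldsymbol\eta>sf)}{s}=E\Big(\inf_{0\le t\le 1}(|f(t)|Z_t)\Big)$.
   Context: $E[0,1]$: bounded functions on $[0,1]$ with finitely many discontinuities; $\bar E^-[0,1]=\{f\in E[0,1]:f\le 0\}$. $\boldsymbol\eta>f$ means $\eta_t>f(t)$ for all $t\in[0,1]$. A generator is a process $\mathbf Z$ with continuous nonnegative paths, $\max_t Z_t=m$ a.s. for a constant $m\in[1,\infty)$, and $E(Z_t)=1$ for all $t$. A standard max-stable process with generator $\mathbf Z$ is a process with paths in $\bar C^-[0,1]=\{f\in C[0,1]:f\le0\}$ that is max-stable (for iid copies $\boldsymbol\eta_i$ and each $n$ there are $a_n>0,b_n\in C[0,1]$ with $\boldsymbol\eta=_D\max_{i\le n}(\boldsymbol\eta_i-b_n)/a_n$ pointwise), has margins $P(\eta_t\le x)=e^x$, $x\le0$, and satisfies $P(\max_{t\in K_j}\eta_t\le x_j,1\le j\le d)=\exp(-E(\max_j|x_j|\max_{t\in K_j}Z_t))$ for all compact $K_1,\dots,K_d\subset[0,1]$ and $x_1,\dots,x_d\le 0$. *)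

theory Defs
  imports "HOL-Probability.Probability"
begin

definition E01 :: "(real \<Rightarrow> real) \<Rightarrow> bool" where
  "E01 f \<longleftrightarrow> bounded (f ` {0..1}) \<and>
     finite {t \<in> {0..1}. \<not> continuous (at t within {0..1}) f}"

definition Eneg01 :: "(real \<Rightarrow> real) \<Rightarrow> bool" where
  "Eneg01 f \<longleftrightarrow> E01 f \<and> (\<forall>t\<in>{0..1}. f t \<le> 0)"

definition generator :: "'b measure \<Rightarrow> (real \<Rightarrow> 'b \<Rightarrow> real) \<Rightarrow> bool" where
  "generator N Z \<longleftrightarrow>
     (\<forall>t\<in>{0..1}. Z t \<in> borel_measurable N) \<and>
     (\<forall>\<omega>\<in>space N. continuous_on {0..1} (\<lambda>t. Z t \<omega>) \<and> (\<forall>t\<in>{0..1}. 0 \<le> Z t \<omega>)) \<and>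
     (\<exists>m::real. 1 \<le> m \<and> (AE \<omega> in N. Sup ((\<lambda>t. Z t \<omega>) ` {0..1}) = m)) \<and>
     (\<forall>t\<in>{0..1}. integrable N (Z t) \<and> integral\<^sup>L N (Z t) = 1)"

definition path_law :: "'a measure \<Rightarrow> (real \<Rightarrow> 'a \<Rightarrow> real) \<Rightarrow> (real \<Rightarrow> real) measure" where
  "path_law M X = distr M (PiM {0..1} (\<lambda>_. borel)) (\<lambda>\<omega>. restrict (\<lambda>t. X t \<omega>) {0..1})"

text \<open>Max-stability: for iid copies \<eta>_1..\<eta>_n (realised on the n-fold product space)
  the process max_i (\<eta>_i - b_n)/a_n has the same law as \<eta>.\<close>
definition max_stable :: "'a measure \<Rightarrow> (real \<Rightarrow> 'a \<Rightarrow> real) \<Rightarrow> bool" where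
  "max_stable M \<eta> \<longleftrightarrow>
     (\<forall>n::nat. 1 \<le> n \<longrightarrow> (\<exists>a::real. \<exists>b::real \<Rightarrow> real. 0 < a \<and> continuous_on {0..1} b \<and>
        path_law M \<eta> =
        path_law (PiM {..<n} (\<lambda>_. M))
          (\<lambda>t \<omega>'. Max ((\<lambda>i. (\<eta> t (\<omega>' i) - b t) / a) ` {..<n}))))"

definition std_max_stable :: "'a measure \<Rightarrow> (real \<Rightarrow> 'a \<Rightarrow> real) \<Rightarrow> 'b measure \<Rightarrow> (real \<Rightarrow> 'b \<Rightarrow> real) \<Rightarrow> bool" where
  "std_max_stable M \<eta> N Z \<longleftrightarrow>
     prob_space M \<and> prob_space N \<and> generator N Z \<and>
     (\<forall>t\<in>{0..1}. \<eta> t \<in> borel_measurable M) \<and>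
     (\<forall>\<omega>\<in>space M. continuous_on {0..1} (\<lambda>t. \<eta> t \<omega>) \<and> (\<forall>t\<in>{0..1}. \<eta> t \<omega> \<le> 0)) \<and>
     max_stable M \<eta> \<and>
     (\<forall>t\<in>{0..1}. \<forall>x\<le>0. measure M {\<omega>\<in>space M. \<eta> t \<omega> \<le> x} = exp x) \<and>
     (\<forall>d::nat. \<forall>K::nat \<Rightarrow> real set. \<forall>x::nat \<Rightarrow> real.
        1 \<le> d \<longrightarrow> (\<forall>j<d. compact (K j) \<and> K j \<noteq> {} \<and> K j \<subseteq> {0..1} \<and> x j \<le> 0) \<longrightarrow>
        measure M {\<omega>\<in>space M. \<forall>j<d. Sup ((\<lambda>t. \<eta> t \<omega>) ` K j) \<le> x j} =
        exp (- integral\<^sup>L N (\<lambda>\<omega>. Max ((\<lambda>j. \<bar>x j\<bar> * Sup ((\<lambda>t. Z t \<omega>) ` K j)) ` {..<d}))))"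

end

theory Submission
  imports Defs
begin


lemma prod_one_minus_expand:
  fixes g :: "'i \<Rightarrow> real"
  assumes "finite J"
  shows "(\<Prod>j\<in>J. 1 - g j) = (\<Sum>S\<in>Pow J. (-1)^card S * (\<Prod>j\<in>S. g j))"
proof -
  have "(\<Prod>j\<in>J. 1 - g j) = (\<Prod>j\<in>J. (- g j) + 1)" by simp
  also have "\<dots> = (\<Sum>S\<in>Pow J. (\<Prod>j\<in>S. - g j) * (\<Prod>j\<in>J-S. 1))"
    by (rule prod_add[OF assms])
  also have "\<dots> = (\<Sum>S\<in>Pow J. (-1)^card S * (\<Prod>j\<in>S. g j))"
    by (intro sum.cong refl) (simp add: prod_uminus)
  finally show ?thesis .
qed

lemma incl_excl_measure:
  fixes A :: "'i \<Rightarrow> 'a set"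
  assumes P: "prob_space M" and J: "finite J" and A: "\<And>j. j \<in> J \<Longrightarrow> A j \<in> sets M"
  shows "measure M {\<omega>\<in>space M. \<forall>j\<in>J. \<omega> \<notin> A j} =
         (\<Sum>S\<in>Pow J. (-1)^card S * measure M {\<omega>\<in>space M. \<forall>j\<in>S. \<omega> \<in> A j})"
proof -
  interpret prob_space M by fact
  have meas: "{\<omega>\<in>space M. \<forall>j\<in>S. \<omega> \<in> A j} \<in> sets M" if "S \<subseteq> J" for S
  proof -
    have "finite S" using that J finite_subset by blast
    then show ?thesis using that A
    proof (induction S rule: finite_induct)
      case empty then show ?case by simp
    next
      case (insert x F)
      have "{\<omega>\<in>space M. \<forall>j\<in>insert x F. \<omega> \<in> A j} = A x \<inter> {\<omega>\<in>space M. \<forall>j\<in>F. \<omega> \<in> A j}"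
        using insert.prems sets.sets_into_space by fastforce
      then show ?case using insert by auto
    qed
  qed
  have meas2: "{\<omega>\<in>space M. \<forall>j\<in>J. \<omega> \<notin> A j} \<in> sets M"
  proof -
    have "{\<omega>\<in>space M. \<forall>j\<in>J. \<omega> \<notin> A j} = space M - (\<Union>j\<in>J. A j)" by auto
    then show ?thesis using A J by (metis sets.Diff sets.finite_UN sets.top)
  qed
  have ind: "(indicator {\<omega>\<in>space M. \<forall>j\<in>J. \<omega> \<notin> A j} \<omega> :: real) =
     (\<Sum>S\<in>Pow J. (-1)^card S * indicator {\<omega>\<in>space M. \<forall>j\<in>S. \<omega> \<in> A j} \<omega>)"
    if "\<omega> \<in> space M" for \<omega>
  proof -
    have "indicator {\<omega>\<in>space M. \<forall>j\<in>J. \<omega> \<notin> A j} \<omega> = (\<Prod>j\<in>J. 1 - indicator (A j) \<omega> :: real)"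
      using that J by (simp add: indicator_def prod.neutral_const)
    also have "\<dots> = (\<Sum>S\<in>Pow J. (-1)^card S * (\<Prod>j\<in>S. indicator (A j) \<omega>))"
      by (rule prod_one_minus_expand[OF J])
    also have "\<dots> = (\<Sum>S\<in>Pow J. (-1)^card S * indicator {\<omega>\<in>space M. \<forall>j\<in>S. \<omega> \<in> A j} \<omega>)"
    proof (intro sum.cong refl)
      fix S assume "S \<in> Pow J"
      then have "finite S" using J finite_subset by blast
      then show "(-1)^card S * (\<Prod>j\<in>S. indicator (A j) \<omega>) = (-1)^card S * (indicator {\<omega>\<in>space M. \<forall>j\<in>S. \<omega> \<in> A j} \<omega> :: real)"
        using that by (simp add: indicator_def prod.neutral_const)
    qed
    finally show ?thesis .
  qed
  have "measure M {\<omega>\<in>space M. \<forall>j\<in>J. \<omega> \<notin> A j} = integral\<^sup>L M (indicator {\<omega>\<in>space M. \<forall>j\<in>J. \<omega> \<notin> A j})"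
    using meas2 by simp
  also have "\<dots> = integral\<^sup>L M (\<lambda>\<omega>. \<Sum>S\<in>Pow J. (-1)^card S * indicator {\<omega>\<in>space M. \<forall>j\<in>S. \<omega> \<in> A j} \<omega>)"
    by (intro Bochner_Integration.integral_cong refl ind)
  also have "\<dots> = (\<Sum>S\<in>Pow J. integral\<^sup>L M (\<lambda>\<omega>. (-1)^card S * indicator {\<omega>\<in>space M. \<forall>j\<in>S. \<omega> \<in> A j} \<omega>))"
    by (rule Bochner_Integration.integral_sum) (use meas in \<open>auto intro!: integrable_real_indicator simp: emeasure_eq_measure\<close>)
  also have "\<dots> = (\<Sum>S\<in>Pow J. (-1)^card S * measure M {\<omega>\<in>space M. \<forall>j\<in>S. \<omega> \<in> A j})"
    by (intro sum.cong refl) (use meas in auto)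
  finally show ?thesis .
qed



lemma sorted_nth_image:
  assumes "finite (S::nat set)"
  shows "(\<lambda>i. sorted_list_of_set S ! i) ` {..<card S} = S"
proof -
  have "(\<lambda>i. sorted_list_of_set S ! i) ` {..<length (sorted_list_of_set S)} = set (sorted_list_of_set S)"
    by (auto simp: set_conv_nth)
  then show ?thesis using assms by simp
qed

lemma hyp_fd:
  assumes H: "std_max_stable M \<eta> N Z"
    and S: "finite (S::nat set)" "S \<noteq> {}"
    and t: "\<And>j. j \<in> S \<Longrightarrow> t j \<in> {0..1}"
    and x: "\<And>j. j \<in> S \<Longrightarrow> x j \<le> 0"
  shows "measure M {\<omega>\<in>space M. \<forall>j\<in>S. \<eta> (t j) \<omega> \<le> x j} =
         exp (- integral\<^sup>L N (\<lambda>\<omega>. Max ((\<lambda>j. \<bar>x j\<bar> * Z (t j) \<omega>) ` S)))"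
proof -
  define e where "e = (\<lambda>i. sorted_list_of_set S ! i)"
  define d where "d = card S"
  have eS: "e ` {..<d} = S" unfolding e_def d_def by (rule sorted_nth_image[OF S(1)])
  have d1: "1 \<le> d" using S by (simp add: d_def Suc_le_eq card_gt_0_iff)
  have ein: "e i \<in> S" if "i < d" for i using eS that by blast
  from H have HH: "\<forall>d::nat. \<forall>K::nat \<Rightarrow> real set. \<forall>x::nat \<Rightarrow> real.
        1 \<le> d \<longrightarrow> (\<forall>j<d. compact (K j) \<and> K j \<noteq> {} \<and> K j \<subseteq> {0..1} \<and> x j \<le> 0) \<longrightarrow>
        measure M {\<omega>\<in>space M. \<forall>j<d. Sup ((\<lambda>t. \<eta> t \<omega>) ` K j) \<le> x j} =
        exp (- integral\<^sup>L N (\<lambda>\<omega>. Max ((\<lambda>j. \<bar>x j\<bar> * Sup ((\<lambda>t. Z t \<omega>) ` K j)) ` {..<d})))"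
    unfolding std_max_stable_def by blast
  have *: "measure M {\<omega>\<in>space M. \<forall>i<d. Sup ((\<lambda>s. \<eta> s \<omega>) ` {t (e i)}) \<le> x (e i)} =
        exp (- integral\<^sup>L N (\<lambda>\<omega>. Max ((\<lambda>i. \<bar>x (e i)\<bar> * Sup ((\<lambda>s. Z s \<omega>) ` {t (e i)})) ` {..<d})))"
    using HH[rule_format, of d "\<lambda>i. {t (e i)}" "\<lambda>i. x (e i)"] d1 ein t x by auto
  have s1: "{\<omega>\<in>space M. \<forall>i<d. Sup ((\<lambda>s. \<eta> s \<omega>) ` {t (e i)}) \<le> x (e i)} = {\<omega>\<in>space M. \<forall>j\<in>S. \<eta> (t j) \<omega> \<le> x j}"
    using eS by auto
  have s2: "(\<lambda>i. \<bar>x (e i)\<bar> * Sup ((\<lambda>s. Z s \<omega>) ` {t (e i)})) ` {..<d} = (\<lambda>j. \<bar>x j\<bar> * Z (t j) \<omega>) ` S" for \<omega>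
  proof -
    have "(\<lambda>i. \<bar>x (e i)\<bar> * Sup ((\<lambda>s. Z s \<omega>) ` {t (e i)})) ` {..<d} = (\<lambda>j. \<bar>x j\<bar> * Z (t j) \<omega>) ` (e ` {..<d})"
      by (simp add: image_image)
    then show ?thesis using eS by simp
  qed
  show ?thesis using * unfolding s1 s2 .
qed



lemma sum_Pow_insert_split:
  fixes g :: "'i set \<Rightarrow> real"
  assumes "finite A" "x \<notin> A"
  shows "(\<Sum>S\<in>Pow (insert x A). g S) = (\<Sum>S\<in>Pow A. g S + g (insert x S))"
proof -
  have "(\<Sum>S\<in>Pow (insert x A). g S) = (\<Sum>S\<in>Pow A. g S) + (\<Sum>S\<in>insert x ` Pow A. g S)"
    unfolding Pow_insert by (rule sum.union_disjoint) (use assms in auto)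
  also have "(\<Sum>S\<in>insert x ` Pow A. g S) = (\<Sum>S\<in>Pow A. g (insert x S))"
  proof (rule sum.reindex_cong[where l="insert x"])
    show "inj_on (insert x) (Pow A)" using assms by (auto simp: inj_on_def)
  qed auto
  finally show ?thesis by (simp add: sum.distrib)
qed

lemma maxmin_identity:
  fixes y :: "'i \<Rightarrow> real"
  assumes K: "finite K" "K \<noteq> {}"
  shows "(\<Sum>S\<in>Pow K. (-1)^card S * (if S = {} then 0 else Max (y ` S))) = - Min (y ` K)"
proof -
  obtain j0 where j0: "j0 \<in> K" "y j0 = Min (y ` K)"
    using K by (metis (mono_tags, lifting) Min_in finite_imageI image_iff image_is_empty)
  define K' where "K' = K - {j0}"
  have KK: "K = insert j0 K'" "finite K'" "j0 \<notin> K'" using j0 K by (auto simp: K'_def)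
  let ?g = "\<lambda>S. (-1)^card S * (if S = {} then 0 else Max (y ` S))"
  have "(\<Sum>S\<in>Pow K. ?g S) = (\<Sum>S\<in>Pow K'. ?g S + ?g (insert j0 S))"
    unfolding KK(1) by (rule sum_Pow_insert_split[OF KK(2,3)])
  also have "\<dots> = (\<Sum>S\<in>Pow K'. if S = {} then - y j0 else 0)"
  proof (intro sum.cong refl)
    fix S assume S: "S \<in> Pow K'"
    have fS: "finite S" using S KK(2) finite_subset by blast
    have nj: "j0 \<notin> S" using S KK(3) by blast
    have cs: "card (insert j0 S) = Suc (card S)" using fS nj by simp
    show "?g S + ?g (insert j0 S) = (if S = {} then - y j0 else 0)"
    proof (cases "S = {}")
      case True then show ?thesis by simp
    next
      case False
      have le: "y j0 \<le> y j" if "j \<in> S" for j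
      proof -
        have "j \<in> K" using S that KK(1) by blast
        then show ?thesis using j0 K by simp
      qed
      have "Max (y ` insert j0 S) = max (y j0) (Max (y ` S))"
        using fS False by simp
      also have "\<dots> = Max (y ` S)"
      proof -
        obtain j where "j \<in> S" using False by blast
        then have "y j \<le> Max (y ` S)" using fS by simp
        then show ?thesis using le[OF \<open>j \<in> S\<close>] by (simp add: max_def)
      qed
      finally show ?thesis using False cs by simp
    qed
  qed
  also have "\<dots> = - y j0"
    by (simp add: sum.delta'[where a="{}" and S="Pow K'", simplified] KK(2))
  finally show ?thesis using j0 by simp
qed

lemma integrable_Max_fin:
  fixes f :: "'i \<Rightarrow> 'a \<Rightarrow> real"
  assumes "finite S" "S \<noteq> {}" "\<And>i. i \<in> S \<Longrightarrow> integrable N (f i)"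
  shows "integrable N (\<lambda>x. Max ((\<lambda>i. f i x) ` S))"
  using assms
proof (induction S rule: finite_ne_induct)
  case (singleton x) then show ?case by simp
next
  case (insert x F)
  then show ?case by (simp add: Max_insert)
qed

lemma integrable_Min_fin:
  fixes f :: "'i \<Rightarrow> 'a \<Rightarrow> real"
  assumes "finite S" "S \<noteq> {}" "\<And>i. i \<in> S \<Longrightarrow> integrable N (f i)"
  shows "integrable N (\<lambda>x. Min ((\<lambda>i. f i x) ` S))"
  using assms
proof (induction S rule: finite_ne_induct)
  case (singleton x) then show ?case by simp
next
  case (insert x F)
  then show ?case by (simp add: Min_insert)
qed



lemma notin_all_sets:
  assumes "finite J" "\<And>j. j \<in> J \<Longrightarrow> A j \<in> sets M"
  shows "{\<omega>\<in>space M. \<forall>j\<in>J. \<omega> \<notin> A j} \<in> sets M"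
proof -
  have e: "{\<omega>\<in>space M. \<forall>j\<in>J. \<omega> \<notin> A j} = space M - (\<Union>j\<in>J. A j)" by auto
  have "space M - (\<Union>j\<in>J. A j) \<in> sets M" using assms by (intro sets.Diff sets.top sets.finite_UN) auto
  then show ?thesis unfolding e .
qed

lemma in_all_sets:
  assumes "finite J" "\<And>j. j \<in> J \<Longrightarrow> A j \<in> sets M"
  shows "{\<omega>\<in>space M. \<forall>j\<in>J. \<omega> \<in> A j} \<in> sets M"
proof -
  have e: "{\<omega>\<in>space M. \<forall>j\<in>J. \<omega> \<in> A j} = space M - (\<Union>j\<in>J. space M - A j)" by auto
  have "space M - (\<Union>j\<in>J. space M - A j) \<in> sets M" using assms by (intro sets.Diff sets.top sets.finite_UN) auto
  then show ?thesis unfolding e .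
qed

locale fdsetup =
  fixes M :: "'a measure" and \<eta> :: "real \<Rightarrow> 'a \<Rightarrow> real"
    and N :: "'b measure" and Z :: "real \<Rightarrow> 'b \<Rightarrow> real"
    and t :: "nat \<Rightarrow> real" and c :: "nat \<Rightarrow> real" and K :: "nat set"
  assumes H: "std_max_stable M \<eta> N Z"
    and K: "finite K" "K \<noteq> {}"
    and tK: "\<And>j. j \<in> K \<Longrightarrow> t j \<in> {0..1}"
    and cK: "\<And>j. j \<in> K \<Longrightarrow> 0 \<le> c j"
begin

definition V :: "nat set \<Rightarrow> real" where
  "V S = integral\<^sup>L N (\<lambda>\<omega>. if S = {} then 0 else Max ((\<lambda>j. c j * Z (t j) \<omega>) ` S))"

definition Phi :: "real \<Rightarrow> real" where
  "Phi r = (\<Sum>S\<in>Pow K. (-1)^card S * exp (- r * V S))"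

definition lam :: real where
  "lam = integral\<^sup>L N (\<lambda>\<omega>. Min ((\<lambda>j. c j * Z (t j) \<omega>) ` K))"

definition ev :: "real \<Rightarrow> 'a set" where
  "ev r = {\<omega>\<in>space M. \<forall>j\<in>K. \<eta> (t j) \<omega> > - r * c j}"

definition Bs :: "real \<Rightarrow> nat \<Rightarrow> 'a set" where
  "Bs r j = {\<omega>\<in>space M. \<eta> (t j) \<omega> \<le> - r * c j}"

lemma PM: "prob_space M" using H unfolding std_max_stable_def by (elim conjE) assumption
lemma PN: "prob_space N" using H unfolding std_max_stable_def by (elim conjE) assumption

lemma eta_meas: "j \<in> K \<Longrightarrow> \<eta> (t j) \<in> borel_measurable M"
proof -
  have "\<forall>t\<in>{0..1}. \<eta> t \<in> borel_measurable M" using H unfolding std_max_stable_def by (elim conjE) assumption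
  then show "j \<in> K \<Longrightarrow> \<eta> (t j) \<in> borel_measurable M" using tK by blast
qed

lemma eta_le0: "\<omega> \<in> space M \<Longrightarrow> j \<in> K \<Longrightarrow> \<eta> (t j) \<omega> \<le> 0"
proof -
  have "\<forall>\<omega>\<in>space M. continuous_on {0..1} (\<lambda>t. \<eta> t \<omega>) \<and> (\<forall>t\<in>{0..1}. \<eta> t \<omega> \<le> 0)" using H unfolding std_max_stable_def by (elim conjE) assumption
  then show "\<omega> \<in> space M \<Longrightarrow> j \<in> K \<Longrightarrow> \<eta> (t j) \<omega> \<le> 0" using tK by blast
qed

lemma Z_int: "j \<in> K \<Longrightarrow> integrable N (Z (t j))"
proof -
  have "generator N Z" using H unfolding std_max_stable_def by (elim conjE) assumption
  then have "\<forall>t\<in>{0..1}. integrable N (Z t) \<and> integral\<^sup>L N (Z t) = 1" unfolding generator_def by (elim conjE) assumption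
  then show "j \<in> K \<Longrightarrow> integrable N (Z (t j))" using tK by blast
qed

lemma Bs_sets: "j \<in> K \<Longrightarrow> Bs r j \<in> sets M"
proof -
  assume "j \<in> K"
  then have [measurable]: "\<eta> (t j) \<in> borel_measurable M" by (rule eta_meas)
  show ?thesis unfolding Bs_def by measurable
qed

lemma ev_alt: "ev r = {\<omega>\<in>space M. \<forall>j\<in>K. \<omega> \<notin> Bs r j}"
  unfolding ev_def Bs_def by auto

lemma ev_sets: "ev r \<in> sets M"
  unfolding ev_alt by (rule notin_all_sets[OF K(1) Bs_sets])

lemma fd_prob:
  assumes S: "S \<subseteq> K" and r: "0 \<le> r"
  shows "measure M {\<omega>\<in>space M. \<forall>j\<in>S. \<omega> \<in> Bs r j} = exp (- r * V S)"
proof (cases "S = {}")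
  case True
  then show ?thesis using prob_space.prob_space[OF PM] by (simp add: V_def)
next
  case False
  have fS: "finite S" using S K finite_subset by blast
  have "{\<omega>\<in>space M. \<forall>j\<in>S. \<omega> \<in> Bs r j} = {\<omega>\<in>space M. \<forall>j\<in>S. \<eta> (t j) \<omega> \<le> - r * c j}"
    unfolding Bs_def by auto
  also have "measure M \<dots> = exp (- integral\<^sup>L N (\<lambda>\<omega>. Max ((\<lambda>j. \<bar>- r * c j\<bar> * Z (t j) \<omega>) ` S)))"
    by (rule hyp_fd[OF H fS False]) (use S tK cK r in auto)
  also have "(\<lambda>\<omega>. Max ((\<lambda>j. \<bar>- r * c j\<bar> * Z (t j) \<omega>) ` S)) = (\<lambda>\<omega>. r * Max ((\<lambda>j. c j * Z (t j) \<omega>) ` S))"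
  proof
    fix \<omega>
    have "(\<lambda>j. \<bar>- r * c j\<bar> * Z (t j) \<omega>) ` S = (\<lambda>u. r * u) ` ((\<lambda>j. c j * Z (t j) \<omega>) ` S)"
      using S cK r by (auto simp: image_image abs_mult intro!: image_cong)
    also have "Max \<dots> = r * Max ((\<lambda>j. c j * Z (t j) \<omega>) ` S)"
      by (rule hom_Max_commute[symmetric]) (use fS False r in \<open>auto simp: max_mult_distrib_left\<close>)
    finally show "Max ((\<lambda>j. \<bar>- r * c j\<bar> * Z (t j) \<omega>) ` S) = r * Max ((\<lambda>j. c j * Z (t j) \<omega>) ` S)" .
  qed
  also have "integral\<^sup>L N (\<lambda>\<omega>. r * Max ((\<lambda>j. c j * Z (t j) \<omega>) ` S)) = r * V S"
    using False by (simp add: V_def)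
  finally show ?thesis by simp
qed

lemma Phi_eq:
  assumes r: "0 \<le> r"
  shows "measure M (ev r) = Phi r"
proof -
  have "measure M (ev r) = (\<Sum>S\<in>Pow K. (-1)^card S * measure M {\<omega>\<in>space M. \<forall>j\<in>S. \<omega> \<in> Bs r j})"
    unfolding ev_alt by (rule incl_excl_measure[OF PM K(1) Bs_sets])
  also have "\<dots> = Phi r"
    unfolding Phi_def by (intro sum.cong refl) (simp add: fd_prob r)
  finally show ?thesis .
qed

lemma Phi_0: "Phi 0 = 0"
proof -
  obtain j where j: "j \<in> K" using K by blast
  have "ev 0 = {}" using eta_le0 j by (force simp: ev_def)
  then show ?thesis using Phi_eq[of 0] by simp
qed

lemma Phi_bounds: "0 \<le> r \<Longrightarrow> 0 \<le> Phi r \<and> Phi r \<le> 1"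
  using Phi_eq[of r] prob_space.prob_le_1[OF PM] by (metis measure_nonneg)

lemma V_int: "S \<subseteq> K \<Longrightarrow> integrable N (\<lambda>\<omega>. if S = {} then 0 else Max ((\<lambda>j. c j * Z (t j) \<omega>) ` S))"
proof (cases "S = {}")
  case False
  assume S: "S \<subseteq> K"
  have "finite S" using S K finite_subset by blast
  then have "integrable N (\<lambda>\<omega>. Max ((\<lambda>j. c j * Z (t j) \<omega>) ` S))"
    by (intro integrable_Max_fin False) (use S Z_int in auto)
  then show ?thesis using False by simp
qed simp

lemma V_identity: "(\<Sum>S\<in>Pow K. (-1)^card S * V S) = - lam"
proof -
  have "(\<Sum>S\<in>Pow K. (-1)^card S * V S) =
     (\<Sum>S\<in>Pow K. integral\<^sup>L N (\<lambda>\<omega>. (-1)^card S * (if S = {} then 0 else Max ((\<lambda>j. c j * Z (t j) \<omega>) ` S))))"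
    unfolding V_def by simp
  also have "\<dots> = integral\<^sup>L N (\<lambda>\<omega>. \<Sum>S\<in>Pow K. (-1)^card S * (if S = {} then 0 else Max ((\<lambda>j. c j * Z (t j) \<omega>) ` S)))"
    by (rule Bochner_Integration.integral_sum[symmetric]) (use V_int in auto)
  also have "\<dots> = integral\<^sup>L N (\<lambda>\<omega>. - Min ((\<lambda>j. c j * Z (t j) \<omega>) ` K))"
    by (intro Bochner_Integration.integral_cong refl maxmin_identity K)
  also have "\<dots> = - lam" unfolding lam_def by simp
  finally show ?thesis .
qed

lemma Phi_deriv: "(Phi has_real_derivative lam) (at 0)"
proof -
  have "(Phi has_real_derivative (\<Sum>S\<in>Pow K. (-1)^card S * (exp (- 0 * V S) * (- V S)))) (at 0)"
    unfolding Phi_def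
    by (intro DERIV_sum DERIV_cmult) (auto intro!: derivative_eq_intros)
  moreover have "(\<Sum>S\<in>Pow K. (-1)^card S * (exp (- 0 * V S) * (- V S))) = lam"
    using V_identity by (simp add: sum_negf)
  ultimately show ?thesis by simp
qed

lemma Phi_quot: "((\<lambda>r. Phi r / r) \<longlongrightarrow> lam) (at_right 0)"
proof -
  have "((\<lambda>h. (Phi (0 + h) - Phi 0) / h) \<longlongrightarrow> lam) (at 0)"
    using Phi_deriv by (simp add: DERIV_def)
  then have "((\<lambda>h. Phi h / h) \<longlongrightarrow> lam) (at 0)" by (simp add: Phi_0)
  then show ?thesis by (rule tendsto_mono[OF at_le, rotated]) simp
qed

end


lemma ps_int_ind:
  assumes "prob_space M" "A \<in> sets M"
  shows "integrable M (\<lambda>\<omega>. a * indicator A \<omega> :: real)"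
proof -
  interpret prob_space M by fact
  have "integrable M (indicator A :: 'a \<Rightarrow> real)"
    using assms(2) by (intro integrable_real_indicator) (auto simp: emeasure_eq_measure)
  then show ?thesis by simp
qed

context fdsetup
begin

lemma Phi_mult:
  assumes r1: "0 \<le> r1" and r2: "0 \<le> r2"
  shows "1 - Phi (r1 + r2) \<le> (1 - Phi r1) * (1 - Phi r2)"
proof -
  interpret prob_space M by (rule PM)
  define C1 where "C1 S = {\<omega>\<in>space M. \<forall>j\<in>S. \<omega> \<in> Bs r1 j}" for S
  define Q where "Q J = measure M {\<omega>\<in>space M. \<forall>j\<in>J. \<omega> \<notin> Bs r2 j}" for J
  define Jw where "Jw \<omega> = {j\<in>K. \<omega> \<in> Bs r1 j}" for \<omega>
  define e where "e S = (-1)^card S * exp (- r2 * V S)" for S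
  have finS: "S \<subseteq> K \<Longrightarrow> finite S" for S using K finite_subset by blast
  have C1_sets: "S \<subseteq> K \<Longrightarrow> C1 S \<in> sets M" for S
    unfolding C1_def by (rule in_all_sets) (auto simp: finS Bs_sets)
  have Q_ie: "Q J = (\<Sum>S\<in>Pow J. e S)" if J: "J \<subseteq> K" for J
  proof -
    have "Q J = (\<Sum>S\<in>Pow J. (-1)^card S * measure M {\<omega>\<in>space M. \<forall>j\<in>S. \<omega> \<in> Bs r2 j})"
      unfolding Q_def by (rule incl_excl_measure[OF PM finS[OF J]]) (use J Bs_sets in auto)
    also have "\<dots> = (\<Sum>S\<in>Pow J. e S)"
      unfolding e_def by (intro sum.cong refl) (use J in \<open>auto simp: fd_prob r2\<close>)
    finally show ?thesis .
  qed
  have QK: "Q K = Phi r2" unfolding Q_def using Phi_eq[OF r2] by (simp add: ev_alt)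
  have Qge: "Q K \<le> Q J" if J: "J \<subseteq> K" for J
    unfolding Q_def
    by (rule finite_measure_mono) (use J in \<open>auto intro!: notin_all_sets finS Bs_sets\<close>)
  have Q0: "Q {} = 1" unfolding Q_def using prob_space by simp
  have C1_int: "integrable M (indicator (C1 S) :: 'a \<Rightarrow> real)" if "S \<subseteq> K" for S
    using ps_int_ind[OF PM C1_sets[OF that], of 1] by simp
  have step1: "Phi (r1 + r2) = (\<Sum>S\<in>Pow K. e S * measure M (C1 S))"
    unfolding Phi_def e_def C1_def
    by (intro sum.cong refl) (auto simp: fd_prob r1 algebra_simps exp_add[symmetric])
  also have "\<dots> = (\<Sum>S\<in>Pow K. integral\<^sup>L M (\<lambda>\<omega>. e S * indicator (C1 S) \<omega>))"
    apply (intro sum.cong refl)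
    subgoal for S using C1_int[of S] C1_sets[of S] by simp
    done
  also have "\<dots> = integral\<^sup>L M (\<lambda>\<omega>. \<Sum>S\<in>Pow K. e S * indicator (C1 S) \<omega>)"
    apply (rule Bochner_Integration.integral_sum[symmetric])
    subgoal for S using C1_int[of S] by auto
    done
  finally have step2: "Phi (r1 + r2) = integral\<^sup>L M (\<lambda>\<omega>. \<Sum>S\<in>Pow K. e S * indicator (C1 S) \<omega>)" .
  have pw: "(\<Sum>S\<in>Pow K. e S * indicator (C1 S) \<omega>) = Q (Jw \<omega>)" if w: "\<omega> \<in> space M" for \<omega>
  proof -
    have JK: "Jw \<omega> \<subseteq> K" by (auto simp: Jw_def)
    have "(\<Sum>S\<in>Pow K. e S * indicator (C1 S) \<omega>) = (\<Sum>S\<in>Pow K. if S \<in> Pow (Jw \<omega>) then e S else 0)"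
      by (intro sum.cong refl) (use w in \<open>auto simp: C1_def Jw_def indicator_def\<close>)
    also have "\<dots> = (\<Sum>S\<in>Pow K \<inter> Pow (Jw \<omega>). e S)"
      by (rule sum.inter_restrict[symmetric]) (simp add: K)
    also have "Pow K \<inter> Pow (Jw \<omega>) = Pow (Jw \<omega>)" using JK by auto
    finally show ?thesis using Q_ie[OF JK] by simp
  qed
  have low: "Phi r2 + (1 - Phi r2) * indicator (ev r1) \<omega> \<le> (\<Sum>S\<in>Pow K. e S * indicator (C1 S) \<omega>)"
    if w: "\<omega> \<in> space M" for \<omega>
  proof (cases "\<omega> \<in> ev r1")
    case True
    then have "Jw \<omega> = {}" by (auto simp: ev_alt Jw_def)
    then show ?thesis using pw[OF w] Q0 True by simp
  next
    case False
    have JK: "Jw \<omega> \<subseteq> K" by (auto simp: Jw_def)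
    show ?thesis using pw[OF w] False Qge[OF JK] QK by simp
  qed
  have "integral\<^sup>L M (\<lambda>\<omega>. Phi r2 + (1 - Phi r2) * indicator (ev r1) \<omega>)
      \<le> integral\<^sup>L M (\<lambda>\<omega>. \<Sum>S\<in>Pow K. e S * indicator (C1 S) \<omega>)"
    by (rule integral_mono)
       (use low C1_sets ev_sets in \<open>auto intro!: ps_int_ind[OF PM] Bochner_Integration.integrable_add\<close>)
  moreover have "integral\<^sup>L M (\<lambda>\<omega>. Phi r2 + (1 - Phi r2) * indicator (ev r1) \<omega>) = Phi r2 + (1 - Phi r2) * Phi r1"
    using ev_sets Phi_eq[OF r1] prob_space ps_int_ind[OF PM ev_sets[of r1], of 1]
    by (subst Bochner_Integration.integral_add) (auto intro!: ps_int_ind[OF PM])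
  ultimately have "Phi r2 + (1 - Phi r2) * Phi r1 \<le> Phi (r1 + r2)" using step2 by simp
  then show ?thesis by (simp add: algebra_simps)
qed

lemma psi_pow:
  assumes u: "0 \<le> u"
  shows "1 - Phi (real n * u) \<le> (1 - Phi u) ^ n"
proof (induction n)
  case 0 then show ?case by (simp add: Phi_0)
next
  case (Suc n)
  have nu: "0 \<le> real n * u" using u by simp
  have "1 - Phi (real (Suc n) * u) = 1 - Phi (real n * u + u)" by (simp add: algebra_simps)
  also have "\<dots> \<le> (1 - Phi (real n * u)) * (1 - Phi u)" by (rule Phi_mult[OF nu u])
  also have "\<dots> \<le> (1 - Phi u) ^ n * (1 - Phi u)"
    by (rule mult_right_mono[OF Suc]) (use Phi_bounds[OF u] in simp)
  finally show ?case by (simp add: mult.commute)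
qed

lemma Phi_lower:
  assumes r: "0 \<le> r"
  shows "1 - exp (- r * lam) \<le> Phi r"
proof (cases "r = 0")
  case True then show ?thesis by (simp add: Phi_0)
next
  case False
  with r have rp: "0 < r" by simp
  have bound: "1 - Phi r \<le> exp (- (real n * Phi (r / real n)))" if n: "n \<ge> 1" for n
  proof -
    have u: "0 \<le> r / real n" using r by simp
    have "1 - Phi r = 1 - Phi (real n * (r / real n))" using n by simp
    also have "\<dots> \<le> (1 - Phi (r / real n)) ^ n" by (rule psi_pow[OF u])
    also have "\<dots> \<le> (exp (- Phi (r / real n))) ^ n"
      by (rule power_mono) (use Phi_bounds[OF u] exp_ge_add_one_self[of "- Phi (r / real n)"] in auto)
    also have "\<dots> = exp (- (real n * Phi (r / real n)))" by (simp add: exp_of_nat_mult[symmetric])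
    finally show ?thesis .
  qed
  have lim0: "filterlim (\<lambda>n::nat. r / real n) (at_right 0) sequentially"
  proof -
    have "(\<lambda>n::nat. r / real n) \<longlonglongrightarrow> 0" by (rule tendsto_divide_0[OF tendsto_const filterlim_at_top_imp_at_infinity[OF filterlim_real_sequentially]])
    moreover have "eventually (\<lambda>n. r / real n \<in> {0<..} \<and> r / real n \<noteq> 0) sequentially"
      using eventually_gt_at_top[of "0::nat"] by (rule eventually_mono) (use rp in auto)
    ultimately show ?thesis by (simp add: filterlim_at)
  qed
  have "((\<lambda>n::nat. Phi (r / real n) / (r / real n)) \<longlongrightarrow> lam) sequentially"
    by (rule filterlim_compose[OF Phi_quot lim0])
  then have "((\<lambda>n::nat. r * (Phi (r / real n) / (r / real n))) \<longlongrightarrow> r * lam) sequentially"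
    by (intro tendsto_mult tendsto_const)
  moreover have "eventually (\<lambda>n::nat. r * (Phi (r / real n) / (r / real n)) = real n * Phi (r / real n)) sequentially"
    using eventually_gt_at_top[of "0::nat"] by (rule eventually_mono) (use rp in auto)
  ultimately have "((\<lambda>n::nat. real n * Phi (r / real n)) \<longlongrightarrow> r * lam) sequentially"
    by (rule Lim_transform_eventually)
  then have "((\<lambda>n::nat. exp (- (real n * Phi (r / real n)))) \<longlongrightarrow> exp (- (r * lam))) sequentially"
    by (intro tendsto_exp tendsto_minus)
  moreover have "eventually (\<lambda>n. 1 - Phi r \<le> exp (- (real n * Phi (r / real n)))) sequentially"
    using eventually_ge_at_top[of "1::nat"] by (rule eventually_mono) (rule bound)
  ultimately have "1 - Phi r \<le> exp (- (r * lam))"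
    by (intro tendsto_lowerbound) auto
  then show ?thesis by simp
qed

end


lemma rat_near:
  assumes t: "t \<in> {0..1::real}" and d: "0 < \<delta>"
  shows "\<exists>q\<in>\<rat>. q \<in> {0..1} \<and> \<bar>q - t\<bar> < \<delta>"
proof -
  have "max 0 (t - \<delta>) < min 1 (t + \<delta>)" using t d by auto
  then obtain q where q: "q \<in> \<rat>" "max 0 (t - \<delta>) < q" "q < min 1 (t + \<delta>)"
    using Rats_dense_in_real by blast
  then show ?thesis by (intro bexI[of _ q]) auto
qed

lemma dense_ge:
  fixes g :: "real \<Rightarrow> real"
  assumes t: "t \<in> {0..1}" and cont: "continuous (at t within {0..1}) g" and d0: "0 < \<delta>0"
    and ge: "\<And>q. q \<in> \<rat> \<Longrightarrow> q \<in> {0..1} \<Longrightarrow> \<bar>q - t\<bar> < \<delta>0 \<Longrightarrow> c \<le> g q"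
  shows "c \<le> g t"
proof (rule ccontr)
  assume "\<not> c \<le> g t"
  then have e: "0 < c - g t" by simp
  have "\<exists>\<delta>>0. \<forall>x\<in>{0..1}. dist x t < \<delta> \<longrightarrow> dist (g x) (g t) < c - g t"
    using cont e unfolding continuous_within_eps_delta by blast
  then obtain \<delta> where \<delta>: "0 < \<delta>" "\<And>x. x \<in> {0..1} \<Longrightarrow> dist x t < \<delta> \<Longrightarrow> dist (g x) (g t) < c - g t"
    by blast
  obtain q where q: "q \<in> \<rat>" "q \<in> {0..1}" "\<bar>q - t\<bar> < min \<delta> \<delta>0"
    using rat_near[OF t, of "min \<delta> \<delta>0"] \<delta>(1) d0 by auto
  have "c \<le> g q" using ge q by auto
  moreover have "dist (g q) (g t) < c - g t" using \<delta>(2)[OF q(2)] q(3) by (simp add: dist_real_def)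
  ultimately show False by (simp add: dist_real_def)
qed

lemma Inf_scale:
  fixes A :: "real set"
  assumes "A \<noteq> {}" "bdd_below A" "0 < s"
  shows "Inf ((\<lambda>x. s * x) ` A) = s * Inf A"
proof (rule antisym)
  show "Inf ((\<lambda>x. s * x) ` A) \<le> s * Inf A"
  proof -
    have "Inf ((\<lambda>x. s * x) ` A) / s \<le> Inf A"
    proof (rule cInf_greatest[OF assms(1)])
      fix x assume "x \<in> A"
      obtain m where m: "\<And>x. x \<in> A \<Longrightarrow> m \<le> x" using assms(2) by (auto simp: bdd_below_def)
      have "bdd_below ((\<lambda>x. s * x) ` A)"
        by (rule bdd_belowI[of _ "s * m"]) (use m assms(3) in auto)
      then have "Inf ((\<lambda>x. s * x) ` A) \<le> s * x" using \<open>x \<in> A\<close> by (intro cInf_lower) auto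
      then show "Inf ((\<lambda>x. s * x) ` A) / s \<le> x" using assms(3) by (simp add: field_simps)
    qed
    then show ?thesis using assms(3) by (simp add: field_simps)
  qed
  show "s * Inf A \<le> Inf ((\<lambda>x. s * x) ` A)"
    using assms by (intro cInf_greatest) (auto intro!: cInf_lower)
qed



locale fsetup =
  fixes M :: "'a measure" and \<eta> :: "real \<Rightarrow> 'a \<Rightarrow> real"
    and N :: "'b measure" and Z :: "real \<Rightarrow> 'b \<Rightarrow> real"
    and f :: "real \<Rightarrow> real"
  assumes H: "std_max_stable M \<eta> N Z"
    and Ef: "Eneg01 f"
begin

definition Fd :: "real set" where
  "Fd = {t\<in>{0..1}. \<not> continuous (at t within {0..1}) f}"
definition Dd :: "real set" where
  "Dd = (\<rat> \<inter> {0..1}) \<union> Fd"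
definition d :: "nat \<Rightarrow> real" where
  "d = from_nat_into Dd"
definition W :: "'b \<Rightarrow> real" where
  "W \<omega> = Inf ((\<lambda>t. \<bar>f t\<bar> * Z t \<omega>) ` {0..1})"
definition m :: "nat \<Rightarrow> 'b \<Rightarrow> real" where
  "m n \<omega> = Min ((\<lambda>j. \<bar>f (d j)\<bar> * Z (d j) \<omega>) ` {..n})"

lemma Fd_fin: "finite Fd"
  using Ef unfolding Eneg01_def E01_def Fd_def by blast

lemma f_le0: "t \<in> {0..1} \<Longrightarrow> f t \<le> 0"
  using Ef unfolding Eneg01_def by blast

lemma Dd_count: "countable Dd"
  unfolding Dd_def using Fd_fin countable_rat
  by (intro countable_Un countable_Int1) (auto intro: countable_finite)

lemma Dd_ne: "Dd \<noteq> {}" unfolding Dd_def by auto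

lemma range_d: "range d = Dd" unfolding d_def using Dd_ne Dd_count by simp

lemma d_in: "d k \<in> {0..1}"
proof -
  have "d k \<in> Dd" using range_d by blast
  then show ?thesis by (auto simp: Dd_def Fd_def)
qed

lemma Dd_d: "x \<in> Dd \<Longrightarrow> \<exists>k. d k = x"
  using range_d by (metis rangeE)

lemma gen: "generator N Z" using H unfolding std_max_stable_def by (elim conjE) assumption

lemma PN: "prob_space N" using H unfolding std_max_stable_def by (elim conjE) assumption
lemma PM: "prob_space M" using H unfolding std_max_stable_def by (elim conjE) assumption

lemma Zpath: "\<omega> \<in> space N \<Longrightarrow> continuous_on {0..1} (\<lambda>t. Z t \<omega>) \<and> (\<forall>t\<in>{0..1}. 0 \<le> Z t \<omega>)"
proof -
  have "\<forall>\<omega>\<in>space N. continuous_on {0..1} (\<lambda>t. Z t \<omega>) \<and> (\<forall>t\<in>{0..1}. 0 \<le> Z t \<omega>)"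
    using gen unfolding generator_def by (elim conjE) assumption
  then show "\<omega> \<in> space N \<Longrightarrow> ?thesis" by blast
qed

lemma Z_meas_int: "t \<in> {0..1} \<Longrightarrow> Z t \<in> borel_measurable N \<and> integrable N (Z t)"
proof -
  have a: "\<forall>t\<in>{0..1}. Z t \<in> borel_measurable N"
    using gen unfolding generator_def by (elim conjE) assumption
  have b: "\<forall>t\<in>{0..1}. integrable N (Z t) \<and> integral\<^sup>L N (Z t) = 1"
    using gen unfolding generator_def by (elim conjE) assumption
  show "t \<in> {0..1} \<Longrightarrow> ?thesis" using a b by blast
qed

lemma Z_ge0: "\<omega> \<in> space N \<Longrightarrow> t \<in> {0..1} \<Longrightarrow> 0 \<le> Z t \<omega>"
  using Zpath by blast

lemma h_cont:
  assumes w: "\<omega> \<in> space N" and t: "t \<in> {0..1}" "t \<notin> Fd"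
  shows "continuous (at t within {0..1}) (\<lambda>t. \<bar>f t\<bar> * Z t \<omega>)"
proof -
  have cf: "continuous (at t within {0..1}) f" using t by (simp add: Fd_def)
  have cz: "continuous (at t within {0..1}) (\<lambda>t. Z t \<omega>)"
    using Zpath[OF w] t(1) by (simp add: continuous_on_eq_continuous_within)
  show ?thesis by (intro continuous_intros cf cz)
qed

lemma bdd: "\<omega> \<in> space N \<Longrightarrow> bdd_below ((\<lambda>t. \<bar>f t\<bar> * Z t \<omega>) ` {0..1})"
  by (rule bdd_belowI[of _ 0]) (auto simp: Z_ge0)

lemma W_le: "\<omega> \<in> space N \<Longrightarrow> t \<in> {0..1} \<Longrightarrow> W \<omega> \<le> \<bar>f t\<bar> * Z t \<omega>"
  unfolding W_def by (rule cInf_lower) (auto simp: bdd)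

lemma W_ge0: "\<omega> \<in> space N \<Longrightarrow> 0 \<le> W \<omega>"
  unfolding W_def by (rule cInf_greatest) (auto simp: Z_ge0)

lemma m_le: "k \<le> n \<Longrightarrow> m n \<omega> \<le> \<bar>f (d k)\<bar> * Z (d k) \<omega>"
  unfolding m_def by (rule Min_le) auto

lemma m_in: "\<exists>k\<le>n. m n \<omega> = \<bar>f (d k)\<bar> * Z (d k) \<omega>"
proof -
  have "m n \<omega> \<in> (\<lambda>j. \<bar>f (d j)\<bar> * Z (d j) \<omega>) ` {..n}"
    unfolding m_def by (rule Min_in) auto
  then show ?thesis by auto
qed

lemma W_le_m: "\<omega> \<in> space N \<Longrightarrow> W \<omega> \<le> m n \<omega>"
  using m_in[of n \<omega>] W_le d_in by fastforce

lemma m_ge0: "\<omega> \<in> space N \<Longrightarrow> 0 \<le> m n \<omega>"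
  using W_le_m W_ge0 order_trans by blast

lemma m_dec: "decseq (\<lambda>n. m n \<omega>)"
  unfolding decseq_Suc_iff m_def
  by (intro allI Min_antimono image_mono) auto

lemma m_lim:
  assumes w: "\<omega> \<in> space N"
  shows "(\<lambda>n. m n \<omega>) \<longlonglongrightarrow> W \<omega>"
proof -
  have bb: "bdd_below (range (\<lambda>n. m n \<omega>))"
    by (rule bdd_belowI[of _ 0]) (auto simp: m_ge0[OF w])
  have lim: "(\<lambda>n. m n \<omega>) \<longlonglongrightarrow> (INF n. m n \<omega>)"
    by (rule LIMSEQ_decseq_INF[OF bb m_dec])
  define L where "L = (INF n. m n \<omega>)"
  have Lk: "L \<le> \<bar>f (d k)\<bar> * Z (d k) \<omega>" for k
  proof -
    have "L \<le> m k \<omega>" unfolding L_def by (rule cINF_lower[OF bb]) simp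
    also have "\<dots> \<le> \<bar>f (d k)\<bar> * Z (d k) \<omega>" by (rule m_le) simp
    finally show ?thesis .
  qed
  have "L \<le> W \<omega>"
    unfolding W_def
  proof (rule cInf_greatest)
    show "(\<lambda>t. \<bar>f t\<bar> * Z t \<omega>) ` {0..1} \<noteq> {}" by auto
  next
    fix y assume "y \<in> (\<lambda>t. \<bar>f t\<bar> * Z t \<omega>) ` {0..1}"
    then obtain t where t: "t \<in> {0..1}" "y = \<bar>f t\<bar> * Z t \<omega>" by auto
    show "L \<le> y"
    proof (cases "t \<in> Fd")
      case True
      then have "t \<in> Dd" by (simp add: Dd_def)
      then obtain k where "d k = t" using Dd_d by blast
      then show ?thesis using Lk[of k] t by simp
    next
      case False
      have "L \<le> \<bar>f t\<bar> * Z t \<omega>"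
      proof (rule dense_ge[OF t(1) h_cont[OF w t(1) False], of 1])
        fix q :: real assume q: "q \<in> \<rat>" "q \<in> {0..1}"
        then have "q \<in> Dd" by (simp add: Dd_def)
        then obtain k where "d k = q" using Dd_d by blast
        then show "L \<le> \<bar>f q\<bar> * Z q \<omega>" using Lk[of k] by simp
      qed simp
      then show ?thesis using t by simp
    qed
  qed
  moreover have "W \<omega> \<le> L"
    unfolding L_def by (rule cINF_greatest) (auto simp: W_le_m[OF w])
  ultimately have "L = W \<omega>" by simp
  then show ?thesis using lim unfolding L_def by simp
qed

lemma m_meas: "m n \<in> borel_measurable N"
proof -
  have [measurable]: "Z (d j) \<in> borel_measurable N" for j using Z_meas_int[OF d_in] by blast
  show ?thesis unfolding m_def by measurable
qed

lemma W_meas: "W \<in> borel_measurable N"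
  by (rule borel_measurable_LIMSEQ_real[OF m_lim m_meas])

lemma m0_int: "integrable N (m 0)"
proof -
  have "m 0 = (\<lambda>\<omega>. \<bar>f (d 0)\<bar> * Z (d 0) \<omega>)" by (simp add: m_def fun_eq_iff)
  then show ?thesis using Z_meas_int[OF d_in] by simp
qed

lemma m_bound: "AE \<omega> in N. norm (m n \<omega>) \<le> m 0 \<omega>"
proof (rule AE_I2)
  fix \<omega> assume w: "\<omega> \<in> space N"
  have "m n \<omega> \<le> m 0 \<omega>" using m_dec[of \<omega>] by (simp add: decseq_def)
  then show "norm (m n \<omega>) \<le> m 0 \<omega>" using m_ge0[OF w] by simp
qed

lemma W_int: "integrable N W"
  by (rule integrable_dominated_convergence[OF W_meas m_meas m0_int _ m_bound])
     (rule AE_I2, rule m_lim)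

lemma m_int_lim: "(\<lambda>n. integral\<^sup>L N (m n)) \<longlonglongrightarrow> integral\<^sup>L N W"
  by (rule integral_dominated_convergence[OF W_meas m_meas m0_int _ m_bound])
     (rule AE_I2, rule m_lim)

end


lemma finite_sep:
  fixes F :: "real set"
  assumes "finite F" "t \<notin> F"
  shows "\<exists>\<delta>>0. \<forall>u\<in>F. \<delta> \<le> \<bar>t - u\<bar>"
proof (cases "F = {}")
  case True then show ?thesis by (intro exI[of _ 1]) auto
next
  case False
  define \<delta> where "\<delta> = Min ((\<lambda>u. \<bar>t - u\<bar>) ` F)"
  have "\<delta> \<in> (\<lambda>u. \<bar>t - u\<bar>) ` F" unfolding \<delta>_def using assms False by (intro Min_in) auto
  then have "0 < \<delta>" using assms(2) by auto
  moreover have "\<forall>u\<in>F. \<delta> \<le> \<bar>t - u\<bar>" unfolding \<delta>_def using assms by auto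
  ultimately show ?thesis by blast
qed

lemma strict_above_sets:
  fixes g :: "real \<Rightarrow> real" and \<eta> :: "real \<Rightarrow> 'a \<Rightarrow> real"
  assumes meas: "\<And>t. t \<in> {0..1} \<Longrightarrow> \<eta> t \<in> borel_measurable M"
    and cont: "\<And>\<omega>. \<omega> \<in> space M \<Longrightarrow> continuous_on {0..1} (\<lambda>t. \<eta> t \<omega>)"
    and fin: "finite {t\<in>{0..1}. \<not> continuous (at t within {0..1}) g}"
  shows "{\<omega>\<in>space M. \<forall>t\<in>{0..1}. g t < \<eta> t \<omega>} \<in> sets M"
proof -
  define Fg where "Fg = {t\<in>{0..1}. \<not> continuous (at t within {0..1}) g}"
  define Q where "Q n = {q\<in>\<rat>. q \<in> {0..1} \<and> (\<forall>u\<in>Fg. 1 / (real n + 1) < \<bar>q - u\<bar>)}" for n :: nat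
  have finF: "finite Fg" using fin by (simp add: Fg_def)
  have char: "(\<forall>t\<in>{0..1}. g t < \<eta> t \<omega>) \<longleftrightarrow>
      (\<forall>t\<in>Fg. g t < \<eta> t \<omega>) \<and> (\<forall>n::nat. \<exists>k::nat. \<forall>q\<in>Q n. g q + 1 / (real k + 1) \<le> \<eta> q \<omega>)"
    if w: "\<omega> \<in> space M" for \<omega>
  proof
    assume A: "\<forall>t\<in>{0..1}. g t < \<eta> t \<omega>"
    have "\<exists>k::nat. \<forall>q\<in>Q n. g q + 1 / (real k + 1) \<le> \<eta> q \<omega>" for n
    proof -
      define U where "U = {0..1} \<inter> (\<Inter>u\<in>Fg. {t. 1 / (real n + 1) \<le> \<bar>t - u\<bar>})"
      have QU: "Q n \<subseteq> U" unfolding Q_def U_def by force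
      have "closed (\<Inter>u\<in>Fg. {t. 1 / (real n + 1) \<le> \<bar>t - u\<bar>})"
        by (intro closed_INT ballI closed_Collect_le continuous_intros)
      then have cU: "compact U" unfolding U_def by (intro compact_Int_closed) auto
      have UF: "U \<subseteq> {0..1} - Fg"
      proof
        fix t assume t: "t \<in> U"
        have "t \<notin> Fg"
        proof
          assume "t \<in> Fg"
          then have "1 / (real n + 1) \<le> \<bar>t - t\<bar>" using t by (auto simp: U_def)
          then show False by simp
        qed
        then show "t \<in> {0..1} - Fg" using t by (auto simp: U_def)
      qed
      show ?thesis
      proof (cases "U = {}")
        case True then show ?thesis using QU by auto
      next
        case False
        have "continuous_on U (\<lambda>t. \<eta> t \<omega> - g t)"
          unfolding continuous_on_eq_continuous_within
        proof
          fix t assume t: "t \<in> U"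
          have "continuous (at t within {0..1}) g" using UF t by (auto simp: Fg_def)
          moreover have "continuous (at t within {0..1}) (\<lambda>t. \<eta> t \<omega>)"
            using cont[OF w] UF t by (auto simp: continuous_on_eq_continuous_within)
          ultimately have "continuous (at t within {0..1}) (\<lambda>t. \<eta> t \<omega> - g t)"
            by (intro continuous_intros)
          then show "continuous (at t within U) (\<lambda>t. \<eta> t \<omega> - g t)"
            by (rule continuous_within_subset) (use UF in auto)
        qed
        then obtain t0 where t0: "t0 \<in> U" "\<And>y. y \<in> U \<Longrightarrow> \<eta> t0 \<omega> - g t0 \<le> \<eta> y \<omega> - g y"
          using continuous_attains_inf[OF cU False] by blast
        have "0 < \<eta> t0 \<omega> - g t0" using A t0(1) UF by auto
        then obtain k where k: "inverse (real (Suc k)) < \<eta> t0 \<omega> - g t0"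
          using reals_Archimedean by blast
        show ?thesis
        proof (intro exI[of _ k] ballI)
          fix q assume "q \<in> Q n"
          then have "q \<in> U" using QU by blast
          then have "\<eta> t0 \<omega> - g t0 \<le> \<eta> q \<omega> - g q" by (rule t0(2))
          moreover have "1 / (real k + 1) = inverse (real (Suc k))" by (simp add: inverse_eq_divide)
          ultimately show "g q + 1 / (real k + 1) \<le> \<eta> q \<omega>" using k by linarith
        qed
      qed
    qed
    then show "(\<forall>t\<in>Fg. g t < \<eta> t \<omega>) \<and> (\<forall>n::nat. \<exists>k::nat. \<forall>q\<in>Q n. g q + 1 / (real k + 1) \<le> \<eta> q \<omega>)"
      using A by (auto simp: Fg_def)
  next
    assume B: "(\<forall>t\<in>Fg. g t < \<eta> t \<omega>) \<and> (\<forall>n::nat. \<exists>k::nat. \<forall>q\<in>Q n. g q + 1 / (real k + 1) \<le> \<eta> q \<omega>)"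
    show "\<forall>t\<in>{0..1}. g t < \<eta> t \<omega>"
    proof
      fix t :: real assume t: "t \<in> {0..1}"
      show "g t < \<eta> t \<omega>"
      proof (cases "t \<in> Fg")
        case True then show ?thesis using B by blast
      next
        case False
        obtain \<delta> where \<delta>: "0 < \<delta>" "\<And>u. u \<in> Fg \<Longrightarrow> \<delta> \<le> \<bar>t - u\<bar>"
          using finite_sep[OF finF False] by blast
        obtain n :: nat where n: "inverse (real (Suc n)) < \<delta> / 2"
          using reals_Archimedean[of "\<delta> / 2"] \<delta>(1) by auto
        obtain k :: nat where k: "\<And>q. q \<in> Q n \<Longrightarrow> g q + 1 / (real k + 1) \<le> \<eta> q \<omega>"
          using B by blast
        have cg: "continuous (at t within {0..1}) g" using False t by (simp add: Fg_def)
        have ce: "continuous (at t within {0..1}) (\<lambda>t. \<eta> t \<omega>)"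
          using cont[OF w] t by (simp add: continuous_on_eq_continuous_within)
        have "1 / (real k + 1) \<le> \<eta> t \<omega> - g t"
        proof (rule dense_ge[OF t _ _, of "\<lambda>t. \<eta> t \<omega> - g t" "\<delta> / 2"])
          show "continuous (at t within {0..1}) (\<lambda>t. \<eta> t \<omega> - g t)" by (intro continuous_intros ce cg)
          show "0 < \<delta> / 2" using \<delta>(1) by simp
        next
          fix q assume q: "q \<in> \<rat>" "q \<in> {0..1}" "\<bar>q - t\<bar> < \<delta> / 2"
          have "q \<in> Q n" unfolding Q_def
          proof (intro CollectI conjI q(1) q(2) ballI)
            fix u assume u: "u \<in> Fg"
            have "\<delta> \<le> \<bar>t - u\<bar>" by (rule \<delta>(2)[OF u])
            then have "\<delta> / 2 < \<bar>q - u\<bar>" using q(3) by linarith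
            moreover have "1 / (real n + 1) = inverse (real (Suc n))" by (simp add: inverse_eq_divide)
            ultimately show "1 / (real n + 1) < \<bar>q - u\<bar>" using n by linarith
          qed
          then show "1 / (real k + 1) \<le> \<eta> q \<omega> - g q" using k by force
        qed
        moreover have "0 < 1 / (real k + 1)" by simp
        ultimately show ?thesis by linarith
      qed
    qed
  qed
  have eq: "{\<omega>\<in>space M. \<forall>t\<in>{0..1}. g t < \<eta> t \<omega>} =
      {\<omega>\<in>space M. (\<forall>t\<in>Fg. g t < \<eta> t \<omega>) \<and> (\<forall>n::nat. \<exists>k::nat. \<forall>q\<in>Q n. g q + 1 / (real k + 1) \<le> \<eta> q \<omega>)}"
    using char by blast
  have QQ: "countable (Q n)" for n
    by (rule countable_subset[OF _ countable_rat]) (auto simp: Q_def)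
  have s1: "{\<omega>\<in>space M. g t < \<eta> t \<omega>} \<in> sets M" if "t \<in> {0..1}" for t
  proof -
    have [measurable]: "\<eta> t \<in> borel_measurable M" by (rule meas[OF that])
    show ?thesis by measurable
  qed
  have s2: "{\<omega>\<in>space M. g t + c \<le> \<eta> t \<omega>} \<in> sets M" if "t \<in> {0..1}" for t c
  proof -
    have [measurable]: "\<eta> t \<in> borel_measurable M" by (rule meas[OF that])
    show ?thesis by measurable
  qed
  show ?thesis
    unfolding eq
  proof (intro sets.sets_Collect_conj sets.sets_Collect_countable_All' sets.sets_Collect_countable_All
      sets.sets_Collect_countable_Ex)
    show "countable Fg" using finF by (rule countable_finite)
    show "\<And>t. t \<in> Fg \<Longrightarrow> {\<omega>\<in>space M. g t < \<eta> t \<omega>} \<in> sets M" using s1 by (auto simp: Fg_def)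
    show "\<And>n. countable (Q n)" by (rule QQ)
    show "\<And>n k q. q \<in> Q n \<Longrightarrow> {\<omega>\<in>space M. g q + 1 / (real k + 1) \<le> \<eta> q \<omega>} \<in> sets M"
      using s2 by (auto simp: Q_def)
  qed
qed



context fsetup
begin

lemma eta_meas: "t \<in> {0..1} \<Longrightarrow> \<eta> t \<in> borel_measurable M"
proof -
  have "\<forall>t\<in>{0..1}. \<eta> t \<in> borel_measurable M" using H unfolding std_max_stable_def by (elim conjE) assumption
  then show "t \<in> {0..1} \<Longrightarrow> \<eta> t \<in> borel_measurable M" by blast
qed

lemma eta_path: "\<omega> \<in> space M \<Longrightarrow> continuous_on {0..1} (\<lambda>t. \<eta> t \<omega>) \<and> (\<forall>t\<in>{0..1}. \<eta> t \<omega> \<le> 0)"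
proof -
  have "\<forall>\<omega>\<in>space M. continuous_on {0..1} (\<lambda>t. \<eta> t \<omega>) \<and> (\<forall>t\<in>{0..1}. \<eta> t \<omega> \<le> 0)"
    using H unfolding std_max_stable_def by (elim conjE) assumption
  then show "\<omega> \<in> space M \<Longrightarrow> ?thesis" by blast
qed

lemma target_sets: "{\<omega>\<in>space M. \<forall>t\<in>{0..1}. s * f t < \<eta> t \<omega>} \<in> sets M"
proof (rule strict_above_sets)
  show "\<And>t. t \<in> {0..1} \<Longrightarrow> \<eta> t \<in> borel_measurable M" by (rule eta_meas)
  show "\<And>\<omega>. \<omega> \<in> space M \<Longrightarrow> continuous_on {0..1} (\<lambda>t. \<eta> t \<omega>)" using eta_path by blast
  have "{t\<in>{0..1}. \<not> continuous (at t within {0..1}) (\<lambda>t. s * f t)} \<subseteq> Fd"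
    by (auto simp: Fd_def intro: continuous_intros)
  then show "finite {t\<in>{0..1}. \<not> continuous (at t within {0..1}) (\<lambda>t. s * f t)}"
    using Fd_fin finite_subset by blast
qed

lemma fd_inst:
  assumes "\<And>j. 0 \<le> c j"
  shows "fdsetup M \<eta> N Z d c {..n}"
  by unfold_locales (use H d_in assms in auto)

lemma part_i_eps:
  assumes s: "0 < s" and e: "0 < e" "e < 1" and fneg: "\<And>t. t \<in> {0..1} \<Longrightarrow> f t < 0"
  shows "1 - exp (- ((1 - e) * s * integral\<^sup>L N W)) \<le> measure M {\<omega>\<in>space M. \<forall>t\<in>{0..1}. s * f t < \<eta> t \<omega>}"
proof -
  interpret prob_space M by (rule PM)
  define G where "G n = {\<omega>\<in>space M. \<forall>j\<le>n. (1 - e) * s * f (d j) \<le> \<eta> (d j) \<omega>}" for n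
  define bnd where "bnd = 1 - exp (- ((1 - e) * s * integral\<^sup>L N W))"
  have es: "0 \<le> (1 - e) * s" using e s by simp
  have Gsets: "G n \<in> sets M" for n
  proof -
    have "G n = {\<omega>\<in>space M. \<forall>j\<in>{..n}. \<omega> \<in> {\<omega>\<in>space M. (1 - e) * s * f (d j) \<le> \<eta> (d j) \<omega>}}"
      by (auto simp: G_def)
    also have "\<dots> \<in> sets M"
    proof (rule in_all_sets)
      fix j
      have [measurable]: "\<eta> (d j) \<in> borel_measurable M" by (rule eta_meas[OF d_in])
      show "{\<omega>\<in>space M. (1 - e) * s * f (d j) \<le> \<eta> (d j) \<omega>} \<in> sets M" by measurable
    qed simp
    finally show ?thesis .
  qed
  have Gdec: "decseq G" unfolding decseq_def G_def by auto
  have Gbound: "bnd \<le> measure M (G n)" for n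
  proof -
    define c where "c j = (1 - e) * s * \<bar>f (d j)\<bar>" for j
    have c0: "0 \<le> c j" for j using es by (simp add: c_def)
    interpret fd: fdsetup M \<eta> N Z d c "{..n}" by (rule fd_inst[OF c0])
    have sub: "fd.ev 1 \<subseteq> G n"
    proof
      fix \<omega> assume "\<omega> \<in> fd.ev 1"
      then have w: "\<omega> \<in> space M" and A: "\<forall>j\<in>{..n}. - 1 * c j < \<eta> (d j) \<omega>" by (auto simp: fd.ev_def)
      have "(1 - e) * s * f (d j) = - 1 * c j" for j using f_le0[OF d_in[of j]] by (simp add: c_def)
      then show "\<omega> \<in> G n" using w A by (auto simp: G_def less_imp_le)
    qed
    have lamge: "(1 - e) * s * integral\<^sup>L N W \<le> fd.lam"
    proof -
      have "(1 - e) * s * integral\<^sup>L N W = integral\<^sup>L N (\<lambda>\<omega>. (1 - e) * s * W \<omega>)" by simp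
      also have "\<dots> \<le> fd.lam" unfolding fd.lam_def
      proof (rule integral_mono)
        show "integrable N (\<lambda>\<omega>. (1 - e) * s * W \<omega>)" using W_int by simp
        show "integrable N (\<lambda>\<omega>. Min ((\<lambda>j. c j * Z (d j) \<omega>) ` {..n}))"
          by (rule integrable_Min_fin) (auto simp: c_def intro!: Z_meas_int[OF d_in, THEN conjunct2])
        fix \<omega> assume w: "\<omega> \<in> space N"
        show "(1 - e) * s * W \<omega> \<le> Min ((\<lambda>j. c j * Z (d j) \<omega>) ` {..n})"
        proof (rule Min.boundedI)
          show "finite ((\<lambda>j. c j * Z (d j) \<omega>) ` {..n})" by simp
          show "(\<lambda>j. c j * Z (d j) \<omega>) ` {..n} \<noteq> {}" by simp
          fix y assume "y \<in> (\<lambda>j. c j * Z (d j) \<omega>) ` {..n}"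
          then obtain j where y: "y = c j * Z (d j) \<omega>" by auto
          have "W \<omega> \<le> \<bar>f (d j)\<bar> * Z (d j) \<omega>" by (rule W_le[OF w d_in])
          then have "(1 - e) * s * W \<omega> \<le> (1 - e) * s * (\<bar>f (d j)\<bar> * Z (d j) \<omega>)"
            by (rule mult_left_mono) (rule es)
          then show "(1 - e) * s * W \<omega> \<le> y" by (simp add: y c_def mult.assoc)
        qed
      qed
      finally show ?thesis .
    qed
    have "bnd \<le> 1 - exp (- 1 * fd.lam)" unfolding bnd_def using lamge by simp
    also have "\<dots> \<le> fd.Phi 1" by (rule fd.Phi_lower) simp
    also have "\<dots> = measure M (fd.ev 1)" by (rule fd.Phi_eq[symmetric]) simp
    also have "\<dots> \<le> measure M (G n)" by (rule finite_measure_mono[OF sub Gsets])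
    finally show ?thesis .
  qed
  have lim: "(\<lambda>n. measure M (G n)) \<longlonglongrightarrow> measure M (\<Inter>n. G n)"
    by (rule finite_Lim_measure_decseq) (use Gsets Gdec in auto)
  have "bnd \<le> measure M (\<Inter>n. G n)"
    by (rule tendsto_lowerbound[OF lim]) (auto simp: Gbound)
  also have "\<dots> \<le> measure M {\<omega>\<in>space M. \<forall>t\<in>{0..1}. s * f t < \<eta> t \<omega>}"
  proof (rule finite_measure_mono[OF _ target_sets])
    show "(\<Inter>n. G n) \<subseteq> {\<omega>\<in>space M. \<forall>t\<in>{0..1}. s * f t < \<eta> t \<omega>}"
    proof
      fix \<omega> assume "\<omega> \<in> (\<Inter>n. G n)"
      then have w: "\<omega> \<in> space M" and A: "\<And>j. (1 - e) * s * f (d j) \<le> \<eta> (d j) \<omega>"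
        by (auto simp: G_def)
      have "s * f t < \<eta> t \<omega>" if t: "t \<in> {0..1}" for t
      proof -
        have "(1 - e) * s * f t \<le> \<eta> t \<omega>"
        proof (cases "t \<in> Fd")
          case True
          then have "t \<in> Dd" by (simp add: Dd_def)
          then obtain k where "d k = t" using Dd_d by blast
          then show ?thesis using A[of k] by simp
        next
          case False
          have cf: "continuous (at t within {0..1}) f" using False t by (simp add: Fd_def)
          have ce: "continuous (at t within {0..1}) (\<lambda>t. \<eta> t \<omega>)"
            using eta_path[OF w] t by (simp add: continuous_on_eq_continuous_within)
          have "0 \<le> \<eta> t \<omega> - (1 - e) * s * f t"
          proof (rule dense_ge[OF t _ zero_less_one, of "\<lambda>t. \<eta> t \<omega> - (1 - e) * s * f t"])
            show "continuous (at t within {0..1}) (\<lambda>t. \<eta> t \<omega> - (1 - e) * s * f t)"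
              by (intro continuous_intros ce cf)
          next
            fix q :: real assume q: "q \<in> \<rat>" "q \<in> {0..1}"
            then have "q \<in> Dd" by (simp add: Dd_def)
            then obtain k where "d k = q" using Dd_d by blast
            then show "0 \<le> \<eta> q \<omega> - (1 - e) * s * f q" using A[of k] by simp
          qed
          then show ?thesis by simp
        qed
        moreover have "s * f t < (1 - e) * s * f t"
        proof -
          have "0 < e * s * (- f t)" using e s fneg[OF t] by (intro mult_pos_pos) auto
          then show ?thesis by (simp add: algebra_simps)
        qed
        ultimately show ?thesis by linarith
      qed
      then show "\<omega> \<in> {\<omega>\<in>space M. \<forall>t\<in>{0..1}. s * f t < \<eta> t \<omega>}" using w by auto
    qed
  qed
  finally show ?thesis unfolding bnd_def .
qed

lemma part_i_gen:
  assumes s: "0 < s"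
  shows "1 - exp (- (s * integral\<^sup>L N W)) \<le> measure M {\<omega>\<in>space M. \<forall>t\<in>{0..1}. s * f t < \<eta> t \<omega>}"
proof (cases "\<exists>t0\<in>{0..1}. f t0 = 0")
  case True
  then obtain t0 where t0: "t0 \<in> {0..1}" "f t0 = 0" by blast
  have "integral\<^sup>L N W = integral\<^sup>L N (\<lambda>\<omega>. 0)"
  proof (rule Bochner_Integration.integral_cong[OF refl])
    fix \<omega> assume w: "\<omega> \<in> space N"
    show "W \<omega> = 0" using W_le[OF w t0(1)] W_ge0[OF w] t0(2) by simp
  qed
  then show ?thesis by simp
next
  case False
  then have fneg: "\<And>t. t \<in> {0..1} \<Longrightarrow> f t < 0" using f_le0 by (metis less_eq_real_def)
  define P where "P = measure M {\<omega>\<in>space M. \<forall>t\<in>{0..1}. s * f t < \<eta> t \<omega>}"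
  define e where "e n = 1 / (2 + real n)" for n :: nat
  have "(\<lambda>n. e n) \<longlonglongrightarrow> 0" unfolding e_def
    by (rule tendsto_divide_0[OF tendsto_const]) 
       (rule filterlim_at_top_imp_at_infinity, rule filterlim_tendsto_add_at_top[OF tendsto_const filterlim_real_sequentially])
  then have "(\<lambda>n. 1 - exp (- ((1 - e n) * s * integral\<^sup>L N W))) \<longlonglongrightarrow> 1 - exp (- ((1 - 0) * s * integral\<^sup>L N W))"
    by (intro tendsto_intros)
  moreover have "\<forall>n. 1 - exp (- ((1 - e n) * s * integral\<^sup>L N W)) \<le> P"
    unfolding P_def by (intro allI part_i_eps[OF s _ _ fneg]) (auto simp: e_def)
  ultimately have "1 - exp (- ((1 - 0) * s * integral\<^sup>L N W)) \<le> P"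
    by (intro tendsto_upperbound) (auto)
  then show ?thesis by (simp add: P_def)
qed

end


theorem mainTheorem5:
  fixes M :: "'a measure" and \<eta> :: "real \<Rightarrow> 'a \<Rightarrow> real"
    and N :: "'b measure" and Z :: "real \<Rightarrow> 'b \<Rightarrow> real"
    and f :: "real \<Rightarrow> real"
  assumes "std_max_stable M \<eta> N Z"
    and "Eneg01 f"
  shows "(measure M {\<omega>\<in>space M. \<forall>t\<in>{0..1}. \<eta> t \<omega> > f t}
           \<ge> 1 - exp (- integral\<^sup>L N (\<lambda>\<omega>. Inf ((\<lambda>t. \<bar>f t\<bar> * Z t \<omega>) ` {0..1})))) \<and>
         ((\<lambda>s. measure M {\<omega>\<in>space M. \<forall>t\<in>{0..1}. \<eta> t \<omega> > s * f t} / s)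
           \<longlongrightarrow> integral\<^sup>L N (\<lambda>\<omega>. Inf ((\<lambda>t. \<bar>f t\<bar> * Z t \<omega>) ` {0..1}))) (at_right 0)"
proof -
  interpret fsetup M \<eta> N Z f by unfold_locales (rule assms)+
  interpret prob_space M by (rule PM)
  define I where "I = integral\<^sup>L N W"
  have IW: "integral\<^sup>L N (\<lambda>\<omega>. Inf ((\<lambda>t. \<bar>f t\<bar> * Z t \<omega>) ` {0..1})) = I"
    by (simp add: I_def W_def[abs_def])
  define P where "P s = measure M {\<omega>\<in>space M. \<forall>t\<in>{0..1}. s * f t < \<eta> t \<omega>}" for s
  have part1: "1 - exp (- I) \<le> measure M {\<omega>\<in>space M. \<forall>t\<in>{0..1}. f t < \<eta> t \<omega>}"
    using part_i_gen[of 1] by (simp add: I_def)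
  have lower: "1 - exp (- (s * I)) \<le> P s" if "0 < s" for s
    using part_i_gen[OF that] by (simp add: I_def P_def)
  have "((\<lambda>s. 1 - exp (- (s * I))) has_real_derivative (exp (- (0 * I)) * I)) (at 0)"
    by (auto intro!: derivative_eq_intros)
  then have "((\<lambda>h. ((1 - exp (- ((0 + h) * I))) - (1 - exp (- (0 * I)))) / h) \<longlongrightarrow> I) (at 0)"
    by (simp add: DERIV_def)
  then have "((\<lambda>h. (1 - exp (- (h * I))) / h) \<longlongrightarrow> I) (at 0)" by simp
  then have lowlim: "((\<lambda>h. (1 - exp (- (h * I))) / h) \<longlongrightarrow> I) (at_right 0)"
    by (rule tendsto_mono[OF at_le, rotated]) simp
  have lim: "((\<lambda>s. P s / s) \<longlongrightarrow> I) (at_right 0)"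
    unfolding order_tendsto_iff
  proof (intro conjI allI impI)
    fix l assume l: "l < I"
    have "eventually (\<lambda>h. l < (1 - exp (- (h * I))) / h) (at_right 0)"
      using lowlim l by (simp add: order_tendsto_iff)
    then show "eventually (\<lambda>s. l < P s / s) (at_right 0)"
      using eventually_at_right_less[of "0::real"]
    proof eventually_elim
      case (elim s)
      have "(1 - exp (- (s * I))) / s \<le> P s / s"
        by (rule divide_right_mono[OF lower]) (use elim in auto)
      then show ?case using elim by linarith
    qed
  next
    fix u assume u: "I < u"
    have "eventually (\<lambda>n. integral\<^sup>L N (m n) < u) sequentially"
      using m_int_lim u unfolding I_def by (simp add: order_tendsto_iff)
    then obtain n where n: "integral\<^sup>L N (m n) < u"
      by (auto simp: eventually_sequentially)
    interpret fd: fdsetup M \<eta> N Z d "\<lambda>j. \<bar>f (d j)\<bar>" "{..n}" by (rule fd_inst) simp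
    have lam: "fd.lam = integral\<^sup>L N (m n)" by (simp add: fd.lam_def m_def[abs_def])
    have "eventually (\<lambda>s. fd.Phi s / s < u) (at_right 0)"
      using fd.Phi_quot u n lam by (simp add: order_tendsto_iff)
    then show "eventually (\<lambda>s. P s / s < u) (at_right 0)"
      using eventually_at_right_less[of "0::real"]
    proof eventually_elim
      case (elim s)
      have sub: "{\<omega>\<in>space M. \<forall>t\<in>{0..1}. s * f t < \<eta> t \<omega>} \<subseteq> fd.ev s"
      proof
        fix \<omega> assume "\<omega> \<in> {\<omega>\<in>space M. \<forall>t\<in>{0..1}. s * f t < \<eta> t \<omega>}"
        then have w: "\<omega> \<in> space M" and A: "\<forall>t\<in>{0..1}. s * f t < \<eta> t \<omega>" by auto
        have "- s * \<bar>f (d j)\<bar> < \<eta> (d j) \<omega>" for j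
          using A d_in[of j] f_le0[OF d_in[of j]] by auto
        then show "\<omega> \<in> fd.ev s" using w by (simp add: fd.ev_def)
      qed
      have "P s \<le> measure M (fd.ev s)"
        unfolding P_def by (rule finite_measure_mono[OF sub fd.ev_sets])
      also have "\<dots> = fd.Phi s" by (rule fd.Phi_eq) (use elim in simp)
      finally have "P s / s \<le> fd.Phi s / s" by (rule divide_right_mono) (use elim in simp)
      then show ?case using elim by linarith
    qed
  qed
  show ?thesis using part1 lim unfolding IW P_def by simp
qed


end
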